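(* Let $k\ge2$, let $\boldsymbol{\pi}\in\Delta_k$ with $\pi_i>0$ for all $i$, and let $f:\mathbb{R}^{k-1}_+\to\mathbb{R}$ be a differentiable convex function. For density ratio vectors $\mathbf{r}(x),\hat{\mathbf{r}}(x)\in\mathbb{R}^{k-1}_+$ (extended by $r_k=\hat r_k=1$), define class probability vectors $\boldsymbol{\eta}(x)=\Psi_{\mathrm{dr}}^{-1}(\mathbf{r}(x))$ and $\hat{\boldsymbol{\eta}}(x)=\Psi_{\mathrm{dr}}^{-1}(\hat{\mathbf{r}}(x))$, where $[\Psi_{\mathrm{dr}}^{-1}(\mathbf{r})]_i=\pi_i r_i/\sum_{j=1}^k\pi_j r_j$. Then for all $x\in\mathcal{X}$, $$\mathbf{B}_f(\boldsymbol{\eta}(x),\hat{\boldsymbol{\eta}}(x))=\frac{\pi_k}{\pi_k+\sum_{i=1}^{k-1}\pi_i r_i(x)}\,\mathbf{B}_{f^\circledast_\pi}(\mathbf{r}(x),\hat{\mathbf{r}}(x)),$$ where $f$ is evaluated on the first $k-1$ coordinates of $\boldsymbol{\eta},\hat{\boldsymbol{\eta}}$, and $f^\circledast_\pi:\mathbb{R}^{k-1}_+\to\mathbb{R}$ is $$f^\circledast_\pi(r_1,\ldots,r_{k-1})=\Big(1+\sum_{i=1}^{k-1}\pi_i r_i/\pi_k\Big)\, f\Big(\frac{\boldsymbol{\pi}_{[1:k-1]}\circ\mathbf{r}}{\pi_k+\sum_{i=1}^{k-1}\pi_i r_i}\Big).$$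
   Context: $\Delta_k=\{\mathbf{p}\in\mathbb{R}^k_{\ge0}:\mathbf{1}^\top\mathbf{p}=1\}$. $\boldsymbol{\pi}_{[1:k-1]}$ is the restriction of $\boldsymbol{\pi}$ to its first $k-1$ coordinates and $\circ$ is the elementwise product. The Bregman divergence of a differentiable convex $\phi$ is $\mathbf{B}_\phi(\mathbf{x},\mathbf{y})=\phi(\mathbf{x})-\phi(\mathbf{y})-\langle \mathbf{x}-\mathbf{y},\nabla\phi(\mathbf{y})\rangle$. *)

theory Defs
  imports "HOL-Analysis.Analysis"
begin

text \<open>Index conventions: R^k is real^('n option), where the coordinate None plays
  the role of the k-th (last) coordinate and Some i (i :: 'n) the first k-1 ones.
  So k = CARD('n option) = CARD('n) + 1, and k >= 2 holds automatically.
  R^(k-1) is real^'n.\<close>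

definition pos_orthant :: "(real^'n) set" where
  "pos_orthant = {x. \<forall>i. 0 < x $ i}"

definition in_simplex :: "real^'m \<Rightarrow> bool" where
  "in_simplex p \<longleftrightarrow> (\<forall>i. 0 \<le> p $ i) \<and> (\<Sum>i\<in>UNIV. p $ i) = 1"

text \<open>Bregman divergence; the term <x - y, grad phi(y)> is the derivative of phi at y
  applied to x - y.\<close>
definition bregman :: "('a::real_normed_vector \<Rightarrow> real) \<Rightarrow> 'a \<Rightarrow> 'a \<Rightarrow> real" where
  "bregman \<phi> x y = \<phi> x - \<phi> y - frechet_derivative \<phi> (at y) (x - y)"

definition ext_ratio :: "real^'n \<Rightarrow> real^('n option)" where
  "ext_ratio r = (\<chi> j. case j of None \<Rightarrow> 1 | Some i \<Rightarrow> r $ i)"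

definition psi_dr_inv :: "real^('n option) \<Rightarrow> real^'n \<Rightarrow> real^('n option)" where
  "psi_dr_inv \<pi> r = (\<chi> i. \<pi> $ i * ext_ratio r $ i / (\<Sum>j\<in>UNIV. \<pi> $ j * ext_ratio r $ j))"

definition first_coords :: "real^('n option) \<Rightarrow> real^'n" where
  "first_coords v = (\<chi> i. v $ Some i)"

definition f_star :: "real^('n option) \<Rightarrow> (real^'n \<Rightarrow> real) \<Rightarrow> real^'n \<Rightarrow> real" where
  "f_star \<pi> f r =
     (1 + (\<Sum>i\<in>UNIV. \<pi> $ Some i * r $ i / \<pi> $ None)) *
     f (\<chi> i. \<pi> $ Some i * r $ i / (\<pi> $ None + (\<Sum>j\<in>UNIV. \<pi> $ Some j * r $ j)))"

end

theory Submission
  imports Defs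
begin

lemma sum_option_UNIV:
  fixes g :: "'n::finite option \<Rightarrow> real"
  shows "(\<Sum>j\<in>UNIV. g j) = g None + (\<Sum>i\<in>UNIV. g (Some i))"
proof -
  have "sum g (insert None (range Some)) = g None + sum g (range Some)"
    by (rule sum.insert) auto
  then have "(\<Sum>j\<in>UNIV. g j) = g None + sum g (range Some)"
    by (metis UNIV_option_conv)
  also have "sum g (range Some) = (\<Sum>i\<in>UNIV. g (Some i))"
    by (simp add: sum.reindex)
  finally show ?thesis .
qed

lemma key:
  fixes \<pi> :: "real^('n::finite option)"
    and f :: "real^'n \<Rightarrow> real"
    and r q :: "real^'n"
  assumes pi_pos: "\<forall>i. 0 < \<pi> $ i"
    and f_diff: "\<forall>y\<in>pos_orthant. f differentiable (at y)"
    and r_pos: "r \<in> pos_orthant"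
    and q_pos: "q \<in> pos_orthant"
  shows "bregman f (first_coords (psi_dr_inv \<pi> r)) (first_coords (psi_dr_inv \<pi> q))
     = \<pi> $ None / (\<pi> $ None + (\<Sum>i\<in>UNIV. \<pi> $ Some i * r $ i))
       * bregman (f_star \<pi> f) r q"
proof -
  define p where "p = \<pi> $ None"
  define a where "a i = \<pi> $ Some i" for i
  define Lin :: "real^'n \<Rightarrow> real^'n" where "Lin h = (\<chi> i. a i * h $ i)" for h
  define L where "L h = (\<Sum>j\<in>UNIV. a j * h $ j)" for h :: "real^'n"
  define S :: "real^'n \<Rightarrow> real" where "S h = p + L h" for h
  define G :: "real^'n \<Rightarrow> real^'n" where "G h = inverse (S h) *\<^sub>R Lin h" for h
  have p_pos: "p > 0" using pi_pos by (simp add: p_def)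
  have a_pos: "a i > 0" for i using pi_pos by (simp add: a_def)
  have Lpos: "h \<in> pos_orthant \<Longrightarrow> L h \<ge> 0" for h
    unfolding L_def pos_orthant_def using a_pos
    by (intro sum_nonneg) (simp add: less_imp_le)
  have Sr: "S r > 0" using Lpos[OF r_pos] p_pos by (simp add: S_def)
  have Sq: "S q > 0" using Lpos[OF q_pos] p_pos by (simp add: S_def)
  have fc: "first_coords (psi_dr_inv \<pi> h) = G h" if "S h > 0" for h
    using that
    by (simp add: first_coords_def psi_dr_inv_def G_def vec_eq_iff sum_option_UNIV
        ext_ratio_def Lin_def S_def L_def a_def p_def field_simps)
  have fs: "f_star \<pi> f = (\<lambda>h. (1 + L h / p) * f (G h))"
  proof
    fix h
    have "(\<chi> i. \<pi> $ Some i * h $ i / (\<pi> $ None + (\<Sum>j\<in>UNIV. \<pi> $ Some j * h $ j))) = G h"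
      by (simp add: G_def vec_eq_iff Lin_def S_def L_def a_def p_def field_simps)
    moreover have "(\<Sum>i\<in>UNIV. \<pi> $ Some i * h $ i / \<pi> $ None) = L h / p"
      by (simp add: L_def a_def p_def sum_divide_distrib)
    ultimately show "f_star \<pi> f h = (1 + L h / p) * f (G h)"
      by (simp add: f_star_def)
  qed
  have Gq_pos: "G q \<in> pos_orthant"
    using Sq q_pos a_pos unfolding pos_orthant_def G_def Lin_def by simp
  define D where "D = frechet_derivative f (at (G q))"
  have hD: "(f has_derivative D) (at (G q))"
    using f_diff Gq_pos frechet_derivative_works D_def by blast
  have linD: "linear D" using hD has_derivative_linear by blast
  have blLin: "bounded_linear Lin"
    unfolding Lin_def
    unfolding linear_conv_bounded_linear[symmetric]
    by (intro linearI) (auto simp: vec_eq_iff algebra_simps)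
  have blL: "bounded_linear L"
    unfolding L_def linear_conv_bounded_linear[symmetric]
    by (intro linearI) (auto simp: sum.distrib sum_distrib_left algebra_simps)
  have hLin: "(Lin has_derivative Lin) (at q)"
    using bounded_linear.has_derivative[OF blLin has_derivative_ident] by simp
  have hL: "(L has_derivative L) (at q)"
    using bounded_linear.has_derivative[OF blL has_derivative_ident] by simp
  have hS: "(S has_derivative L) (at q)"
    unfolding S_def using has_derivative_add[OF has_derivative_const hL] by simp
  have hinv: "((\<lambda>h. inverse (S h)) has_derivative
      (\<lambda>h. - (inverse (S q) * L h * inverse (S q)))) (at q)"
    using Deriv.has_derivative_inverse[OF _ hS] Sq by simp
  define G' where "G' h = inverse (S q) *\<^sub>R Lin h + (- (inverse (S q) * L h * inverse (S q))) *\<^sub>R Lin q" for h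
  have hG: "(G has_derivative G') (at q)"
    unfolding G_def G'_def[abs_def] using has_derivative_scaleR[OF hinv hLin] by simp
  have hFG: "((\<lambda>h. f (G h)) has_derivative (\<lambda>h. D (G' h))) (at q)"
    using has_derivative_compose[OF hG hD] .
  have hA: "((\<lambda>h. 1 + L h / p) has_derivative (\<lambda>h. L h / p)) (at q)"
    using p_pos by (auto intro!: derivative_eq_intros hL)
  have hF: "(f_star \<pi> f has_derivative
      (\<lambda>h. (1 + L q / p) * D (G' h) + L h / p * f (G q))) (at q)"
    unfolding fs using has_derivative_mult[OF hA hFG] by simp
  have fd: "frechet_derivative (f_star \<pi> f) (at q) =
      (\<lambda>h. (1 + L q / p) * D (G' h) + L h / p * f (G q))"
    using frechet_derivative_at[OF hF] by simp
  have Gd: "G' (r - q) = (S r / S q) *\<^sub>R (G r - G q)"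
  proof -
    have Ld0: "L (r - q) = S r - S q"
      using blL by (simp add: linear_diff bounded_linear.linear S_def)
    show ?thesis
      using Sr Sq unfolding vec_eq_iff
      by (simp add: G'_def G_def Lin_def Ld0 field_simps)
  qed
  have Dd: "D (G' (r - q)) = (S r / S q) * D (G r - G q)"
    unfolding Gd using linD by (simp add: linear_scale)
  have Ld: "L (r - q) = L r - L q"
    using blL by (simp add: linear_diff bounded_linear.linear)
  have e1: "1 + L r / p = S r / p" "1 + L q / p = S q / p"
    using p_pos by (simp_all add: S_def field_simps)
  have "bregman (f_star \<pi> f) r q =
      S r / p * f (G r) - S q / p * f (G q)
      - (S q / p * ((S r / S q) * D (G r - G q)) + (S r - S q) / p * f (G q))"
    unfolding bregman_def fd Dd Ld using fs e1 by (simp add: S_def)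
  also have "\<dots> = S r / p * bregman f (G r) (G q)"
    unfolding bregman_def D_def[symmetric] using p_pos Sq
    by (simp add: field_simps)
  finally have "bregman (f_star \<pi> f) r q = S r / p * bregman f (G r) (G q)" .
  moreover have "\<pi> $ None + (\<Sum>i\<in>UNIV. \<pi> $ Some i * r $ i) = S r"
    by (simp add: S_def L_def a_def p_def)
  ultimately show ?thesis
    using fc[OF Sr] fc[OF Sq] Sr p_pos by (simp add: p_def)
qed

theorem proposition2:
  fixes \<pi> :: "real^('n::finite option)"
    and f :: "real^'n \<Rightarrow> real"
    and r rhat :: "'x \<Rightarrow> real^'n"
    and \<X> :: "'x set"
  assumes simplex: "in_simplex \<pi>"
    and pi_pos: "\<forall>i. 0 < \<pi> $ i"
    and f_convex: "convex_on pos_orthant f"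
    and f_diff: "\<forall>y\<in>pos_orthant. f differentiable (at y)"
    and r_pos: "\<forall>x\<in>\<X>. r x \<in> pos_orthant"
    and rhat_pos: "\<forall>x\<in>\<X>. rhat x \<in> pos_orthant"
  shows "\<forall>x\<in>\<X>.
     bregman f (first_coords (psi_dr_inv \<pi> (r x))) (first_coords (psi_dr_inv \<pi> (rhat x)))
     = \<pi> $ None / (\<pi> $ None + (\<Sum>i\<in>UNIV. \<pi> $ Some i * r x $ i))
       * bregman (f_star \<pi> f) (r x) (rhat x)"
  using key[OF pi_pos f_diff] r_pos rhat_pos by blast

end
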